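(* Let $R$ be a commutative ring with identity and $M$ a non-zero comultiplication $R$-module. If $G'(M)$ is non-null and connected, then $\mathrm{diam}(G'(M))\le 2$.
   Context: An $R$-module $M$ is a comultiplication module if for every submodule $N$ of $M$ there is an ideal $I$ of $R$ with $N=\mathrm{Ann}_M(I)$. A submodule $N$ of $M$ is large if $N\cap L\neq 0$ for every non-zero submodule $L$ of $M$. The large sum graph $G'(M)$ has as vertex set the set of all non-zero non-large submodules of $M$, and two distinct vertices $N,K$ are adjacent iff $N+K$ is non-large in $M$. The diameter is the supremum of the distances between pairs of vertices. *)

theory Defs
  imports "HOL-Algebra.Module" "HOL-Algebra.Ideal" "HOL-Library.Extended_Nat"
begin

definition ann_M :: "('a, 'r) ring_scheme \<Rightarrow> ('a, 'b, 'm) module_scheme \<Rightarrow> 'a set \<Rightarrow> 'b set" where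
  "ann_M R M I = {x \<in> carrier M. \<forall>a \<in> I. a \<odot>\<^bsub>M\<^esub> x = \<zero>\<^bsub>M\<^esub>}"

definition comultiplication_module :: "('a, 'r) ring_scheme \<Rightarrow> ('a, 'b, 'm) module_scheme \<Rightarrow> bool" where
  "comultiplication_module R M \<longleftrightarrow> Module.module R M \<and>
     (\<forall>N. submodule N R M \<longrightarrow> (\<exists>I. ideal I R \<and> N = ann_M R M I))"

definition large_submodule :: "('a, 'r) ring_scheme \<Rightarrow> ('a, 'b, 'm) module_scheme \<Rightarrow> 'b set \<Rightarrow> bool" where
  "large_submodule R M N \<longleftrightarrow> submodule N R M \<and>
     (\<forall>L. submodule L R M \<and> L \<noteq> {\<zero>\<^bsub>M\<^esub>} \<longrightarrow> N \<inter> L \<noteq> {\<zero>\<^bsub>M\<^esub>})"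

definition msum :: "('a, 'b, 'm) module_scheme \<Rightarrow> 'b set \<Rightarrow> 'b set \<Rightarrow> 'b set" where
  "msum M N K = {x \<oplus>\<^bsub>M\<^esub> y | x y. x \<in> N \<and> y \<in> K}"

definition lsg_vertices :: "('a, 'r) ring_scheme \<Rightarrow> ('a, 'b, 'm) module_scheme \<Rightarrow> 'b set set" where
  "lsg_vertices R M = {N. submodule N R M \<and> N \<noteq> {\<zero>\<^bsub>M\<^esub>} \<and> \<not> large_submodule R M N}"

definition lsg_adj :: "('a, 'r) ring_scheme \<Rightarrow> ('a, 'b, 'm) module_scheme \<Rightarrow> 'b set \<Rightarrow> 'b set \<Rightarrow> bool" where
  "lsg_adj R M N K \<longleftrightarrow> N \<in> lsg_vertices R M \<and> K \<in> lsg_vertices R M \<and> N \<noteq> K \<and>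
     \<not> large_submodule R M (msum M N K)"

text \<open>Generic graph notions for a graph given by vertex set V and adjacency E
  (E only relates vertices, so E-walks stay inside V).\<close>
definition graph_connected :: "'v set \<Rightarrow> ('v \<Rightarrow> 'v \<Rightarrow> bool) \<Rightarrow> bool" where
  "graph_connected V E \<longleftrightarrow> (\<forall>u \<in> V. \<forall>v \<in> V. E\<^sup>*\<^sup>* u v)"

text \<open>Distance: length of a shortest walk (infinity if none).\<close>
definition graph_dist :: "('v \<Rightarrow> 'v \<Rightarrow> bool) \<Rightarrow> 'v \<Rightarrow> 'v \<Rightarrow> enat" where
  "graph_dist E u v = (INF n \<in> {n. (E ^^ n) u v}. enat n)"

definition graph_diam :: "'v set \<Rightarrow> ('v \<Rightarrow> 'v \<Rightarrow> bool) \<Rightarrow> enat" where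
  "graph_diam V E = (SUP u \<in> V. SUP v \<in> V. graph_dist E u v)"

end

theory Submission
  imports Defs
begin

context Module.module
begin

lemma sm_add_helper: "submodule H R M \<Longrightarrow> x \<in> H \<Longrightarrow> \<zero>\<^bsub>M\<^esub> \<in> H"
proof -
  assume H: "submodule H R M" "x \<in> H"
  then have "x \<in> carrier M" using submoduleE(1) by blast
  then have "x \<oplus>\<^bsub>M\<^esub> \<ominus>\<^bsub>M\<^esub> x = \<zero>\<^bsub>M\<^esub>" by (simp add: M.r_neg)
  moreover have "x \<oplus>\<^bsub>M\<^esub> \<ominus>\<^bsub>M\<^esub> x \<in> H" using H submoduleE(3,5) by blast
  ultimately show ?thesis by simp
qed
lemma sm_carr: "submodule H R M \<Longrightarrow> H \<subseteq> carrier M"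
  using submoduleE(1) by blast
lemma sm_zero: "submodule H R M \<Longrightarrow> \<zero>\<^bsub>M\<^esub> \<in> H"
  using submoduleE(2) submoduleE(6) sm_add_helper by blast
lemma sm_add: "submodule H R M \<Longrightarrow> a \<in> H \<Longrightarrow> b \<in> H \<Longrightarrow> a \<oplus>\<^bsub>M\<^esub> b \<in> H"
  using submoduleE(5) by blast
lemma sm_neg: "submodule H R M \<Longrightarrow> a \<in> H \<Longrightarrow> \<ominus>\<^bsub>M\<^esub> a \<in> H"
  using submoduleE(3) by blast
lemma sm_smult: "submodule H R M \<Longrightarrow> a \<in> carrier R \<Longrightarrow> b \<in> H \<Longrightarrow> a \<odot>\<^bsub>M\<^esub> b \<in> H"
  using submoduleE(4) by blast

lemma sm_inter: "submodule A R M \<Longrightarrow> submodule B R M \<Longrightarrow> submodule (A \<inter> B) R M"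
proof -
  assume A: "submodule A R M" and B: "submodule B R M"
  show ?thesis
  proof (rule submoduleI)
    show "A \<inter> B \<subseteq> carrier M" using sm_carr[OF A] by blast
    show "\<zero>\<^bsub>M\<^esub> \<in> A \<inter> B" using sm_zero[OF A] sm_zero[OF B] by blast
    show "\<ominus>\<^bsub>M\<^esub> a \<in> A \<inter> B" if "a \<in> A \<inter> B" for a
      using sm_neg[OF A, of a] sm_neg[OF B, of a] that by blast
    show "a \<oplus>\<^bsub>M\<^esub> b \<in> A \<inter> B" if "a \<in> A \<inter> B" "b \<in> A \<inter> B" for a b
      using sm_add[OF A, of a b] sm_add[OF B, of a b] that by blast
    show "a \<odot>\<^bsub>M\<^esub> x \<in> A \<inter> B" if "a \<in> carrier R" "x \<in> A \<inter> B" for a x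
      using sm_smult[OF A, of a x] sm_smult[OF B, of a x] that by blast
  qed
qed

lemma msumI: "x \<in> N \<Longrightarrow> y \<in> K \<Longrightarrow> z = x \<oplus>\<^bsub>M\<^esub> y \<Longrightarrow> z \<in> msum M N K"
  unfolding msum_def by blast
lemma msumE: "z \<in> msum M N K \<Longrightarrow> (\<And>x y. x \<in> N \<Longrightarrow> y \<in> K \<Longrightarrow> z = x \<oplus>\<^bsub>M\<^esub> y \<Longrightarrow> P) \<Longrightarrow> P"
  unfolding msum_def by blast

lemma msum_sub: assumes "submodule N R M" "submodule K R M"
  shows "submodule (msum M N K) R M"
proof (rule submoduleI)
  show "msum M N K \<subseteq> carrier M" unfolding msum_def
    using assms sm_carr by blast
  show "\<zero>\<^bsub>M\<^esub> \<in> msum M N K"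
    by (rule msumI[OF sm_zero[OF assms(1)] sm_zero[OF assms(2)]]) simp
  fix a assume "a \<in> msum M N K"
  then obtain x y where xy: "x \<in> N" "y \<in> K" "a = x \<oplus>\<^bsub>M\<^esub> y" unfolding msum_def by blast
  have c: "x \<in> carrier M" "y \<in> carrier M" using xy assms sm_carr by blast+
  have "\<ominus>\<^bsub>M\<^esub> a = \<ominus>\<^bsub>M\<^esub> x \<oplus>\<^bsub>M\<^esub> \<ominus>\<^bsub>M\<^esub> y"
    using xy c by (simp add: M.minus_add)
  then show "\<ominus>\<^bsub>M\<^esub> a \<in> msum M N K"
    using xy assms sm_neg by (intro msumI) auto
next
  fix a b assume "a \<in> msum M N K" "b \<in> msum M N K"
  then obtain x y x' y' where xy: "x \<in> N" "y \<in> K" "a = x \<oplus>\<^bsub>M\<^esub> y"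
     "x' \<in> N" "y' \<in> K" "b = x' \<oplus>\<^bsub>M\<^esub> y'" unfolding msum_def by blast
  have c: "x \<in> carrier M" "y \<in> carrier M" "x' \<in> carrier M" "y' \<in> carrier M"
    using xy assms sm_carr by blast+
  have "a \<oplus>\<^bsub>M\<^esub> b = (x \<oplus>\<^bsub>M\<^esub> x') \<oplus>\<^bsub>M\<^esub> (y \<oplus>\<^bsub>M\<^esub> y')"
    using xy c by (simp add: M.a_ac)
  then show "a \<oplus>\<^bsub>M\<^esub> b \<in> msum M N K"
    using xy assms sm_add by (intro msumI) auto
next
  fix a x assume a: "a \<in> carrier R" "x \<in> msum M N K"
  then obtain u v where xy: "u \<in> N" "v \<in> K" "x = u \<oplus>\<^bsub>M\<^esub> v" unfolding msum_def by blast
  have c: "u \<in> carrier M" "v \<in> carrier M" using xy assms sm_carr by blast+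
  have "a \<odot>\<^bsub>M\<^esub> x = a \<odot>\<^bsub>M\<^esub> u \<oplus>\<^bsub>M\<^esub> a \<odot>\<^bsub>M\<^esub> v"
    using xy c a smult_r_distr by blast
  then show "a \<odot>\<^bsub>M\<^esub> x \<in> msum M N K"
    using xy assms sm_smult a by (intro msumI) auto
qed

lemma msum_comm_sub: assumes "submodule N R M" "submodule K R M" shows "msum M N K \<subseteq> msum M K N"
proof
  fix z assume "z \<in> msum M N K"
  then obtain x y where xy: "x \<in> N" "y \<in> K" "z = x \<oplus>\<^bsub>M\<^esub> y" by (rule msumE)
  then have "z = y \<oplus>\<^bsub>M\<^esub> x" using assms sm_carr M.a_comm by (meson subsetD)
  then show "z \<in> msum M K N" using xy by (intro msumI)
qed
lemma msum_comm: "submodule N R M \<Longrightarrow> submodule K R M \<Longrightarrow> msum M N K = msum M K N"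
  using msum_comm_sub by blast

lemma msum_left_sub: assumes "submodule N R M" "submodule K R M" shows "N \<subseteq> msum M N K"
proof
  fix x assume "x \<in> N"
  then have "x = x \<oplus>\<^bsub>M\<^esub> \<zero>\<^bsub>M\<^esub>" using assms sm_carr by (metis subsetD M.r_zero)
  then show "x \<in> msum M N K" using \<open>x \<in> N\<close> sm_zero[OF assms(2)] by (rule msumI[rotated 2])
qed

lemma msum_absorb: assumes "submodule N R M" "submodule K R M" "K \<subseteq> N"
  shows "msum M N K = N"
proof
  show "msum M N K \<subseteq> N"
  proof
    fix z assume "z \<in> msum M N K"
    then obtain x y where xy: "x \<in> N" "y \<in> K" "z = x \<oplus>\<^bsub>M\<^esub> y" by (rule msumE)
    then show "z \<in> N" using sm_add[OF assms(1) xy(1)] assms(3) by blast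
  qed
  show "N \<subseteq> msum M N K" using msum_left_sub assms by blast
qed

lemma nonzero_iff: "submodule A R M \<Longrightarrow> A \<noteq> {\<zero>\<^bsub>M\<^esub>} \<longleftrightarrow> (\<exists>x\<in>A. x \<noteq> \<zero>\<^bsub>M\<^esub>)"
  using sm_zero by blast

lemma nonlarge_sub: assumes "submodule L R M" "submodule N R M" "L \<subseteq> N"
   "\<not> large_submodule R M N" shows "\<not> large_submodule R M L"
proof
  assume "large_submodule R M L"
  then have "large_submodule R M N" unfolding large_submodule_def
  proof (intro conjI allI impI)
    show "submodule N R M" by fact
    fix Y assume Y: "submodule Y R M \<and> Y \<noteq> {\<zero>\<^bsub>M\<^esub>}"
    with \<open>large_submodule R M L\<close> have "L \<inter> Y \<noteq> {\<zero>\<^bsub>M\<^esub>}" unfolding large_submodule_def by blast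
    then obtain x where "x \<in> L" "x \<in> Y" "x \<noteq> \<zero>\<^bsub>M\<^esub>" using sm_zero assms(1) Y by blast
    then show "N \<inter> Y \<noteq> {\<zero>\<^bsub>M\<^esub>}" using assms(3) by blast
  qed
  then show False using assms by blast
qed


lemma nonzeroE: assumes "submodule A R M" "A \<noteq> {\<zero>\<^bsub>M\<^esub>}"
  obtains x where "x \<in> A" "x \<noteq> \<zero>\<^bsub>M\<^esub>"
  using assms sm_zero by blast

lemma ideal_sub: "ideal I R \<Longrightarrow> I \<subseteq> carrier R"
  by (meson additive_subgroup.a_subset ideal.axioms(1))

lemma ann_memD: "x \<in> ann_M R M I \<Longrightarrow> a \<in> I \<Longrightarrow> a \<odot>\<^bsub>M\<^esub> x = \<zero>\<^bsub>M\<^esub>"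
  unfolding ann_M_def by simp
lemma ann_memI: "x \<in> carrier M \<Longrightarrow> (\<And>a. a \<in> I \<Longrightarrow> a \<odot>\<^bsub>M\<^esub> x = \<zero>\<^bsub>M\<^esub>) \<Longrightarrow> x \<in> ann_M R M I"
  unfolding ann_M_def by simp

lemma nz_int: assumes "submodule A R M" "submodule B R M" "A \<inter> B \<noteq> {\<zero>\<^bsub>M\<^esub>}"
  obtains x where "x \<in> A" "x \<in> B" "x \<noteq> \<zero>\<^bsub>M\<^esub>"
proof -
  have "\<zero>\<^bsub>M\<^esub> \<in> A \<inter> B" using sm_zero[OF assms(1)] sm_zero[OF assms(2)] by simp
  then obtain x where "x \<in> A \<inter> B" "x \<noteq> \<zero>\<^bsub>M\<^esub>" using assms(3) by blast
  then show ?thesis using that by blast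
qed

lemma F:
  assumes N: "submodule N R M" and K: "submodule K R M" and NK: "N \<inter> K = {\<zero>\<^bsub>M\<^esub>}"
    and lg: "large_submodule R M (msum M N K)"
    and I: "I \<subseteq> carrier R" "N = ann_M R M I"
    and Y: "submodule Y R M" "Y \<noteq> {\<zero>\<^bsub>M\<^esub>}" "Y \<inter> N = {\<zero>\<^bsub>M\<^esub>}"
  shows "Y \<inter> K \<noteq> {\<zero>\<^bsub>M\<^esub>}"
proof
  assume YK: "Y \<inter> K = {\<zero>\<^bsub>M\<^esub>}"
  from lg have "\<forall>L. submodule L R M \<and> L \<noteq> {\<zero>\<^bsub>M\<^esub>} \<longrightarrow> msum M N K \<inter> L \<noteq> {\<zero>\<^bsub>M\<^esub>}"
    unfolding large_submodule_def by (rule conjunct2)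
  then have "msum M N K \<inter> Y \<noteq> {\<zero>\<^bsub>M\<^esub>}" using Y(1,2) by simp
  then obtain y where y: "y \<in> msum M N K" "y \<in> Y" "y \<noteq> \<zero>\<^bsub>M\<^esub>"
    by (rule nz_int[OF msum_sub[OF N K] Y(1)])
  from y(1) obtain n k where nk: "n \<in> N" "k \<in> K" "y = n \<oplus>\<^bsub>M\<^esub> k" by (rule msumE)
  have nc: "n \<in> carrier M" "k \<in> carrier M" using nk(1) sm_carr[OF N] nk(2) sm_carr[OF K] by auto
  have "k \<in> ann_M R M I"
  proof (rule ann_memI[OF nc(2)])
    fix a assume a: "a \<in> I"
    have aR: "a \<in> carrier R" using a I(1) by (rule subsetD[rotated])
    have n0: "a \<odot>\<^bsub>M\<^esub> n = \<zero>\<^bsub>M\<^esub>" using ann_memD[of n I a] nk(1) a I(2) by simp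
    have "a \<odot>\<^bsub>M\<^esub> y = a \<odot>\<^bsub>M\<^esub> n \<oplus>\<^bsub>M\<^esub> a \<odot>\<^bsub>M\<^esub> k" using nk(3) nc aR smult_r_distr by simp
    also have "\<dots> = a \<odot>\<^bsub>M\<^esub> k" using n0 nc aR by simp
    finally have e: "a \<odot>\<^bsub>M\<^esub> y = a \<odot>\<^bsub>M\<^esub> k" .
    have "a \<odot>\<^bsub>M\<^esub> y \<in> Y" using sm_smult[OF Y(1) aR y(2)] .
    moreover have "a \<odot>\<^bsub>M\<^esub> k \<in> K" using sm_smult[OF K aR nk(2)] .
    ultimately have "a \<odot>\<^bsub>M\<^esub> k \<in> Y \<inter> K" using e by simp
    then show "a \<odot>\<^bsub>M\<^esub> k = \<zero>\<^bsub>M\<^esub>" using YK by simp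
  qed
  then have "k \<in> N \<inter> K" using I(2) nk(2) by simp
  then have "k = \<zero>\<^bsub>M\<^esub>" using NK by simp
  then have "y = n" using nk(3) nc by simp
  then have "y \<in> Y \<inter> N" using y(2) nk(1) by simp
  then show False using y(3) Y(3) by simp
qed

lemma vert_sub: "N \<in> lsg_vertices R M \<Longrightarrow> submodule N R M"
  unfolding lsg_vertices_def by blast

lemma adj_sym: "lsg_adj R M N K \<Longrightarrow> lsg_adj R M K N"
  unfolding lsg_adj_def using msum_comm vert_sub by metis

lemma case1:
  assumes N: "N \<in> lsg_vertices R M" and K: "K \<in> lsg_vertices R M" and NK: "N \<noteq> K"
    and lg: "large_submodule R M (msum M N K)" and nz: "N \<inter> K \<noteq> {\<zero>\<^bsub>M\<^esub>}"
  shows "\<exists>L. lsg_adj R M N L \<and> lsg_adj R M L K"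
proof -
  have sN: "submodule N R M" and sK: "submodule K R M" using N K vert_sub by blast+
  have nlN: "\<not> large_submodule R M N" and nlK: "\<not> large_submodule R M K"
    using N K unfolding lsg_vertices_def by blast+
  let ?L = "N \<inter> K"
  have sL: "submodule ?L R M" using sm_inter sN sK by blast
  have nlL: "\<not> large_submodule R M ?L" using nonlarge_sub[OF sL sN _ nlN] by blast
  have vL: "?L \<in> lsg_vertices R M" unfolding lsg_vertices_def using sL nz nlL by blast
  have "?L \<noteq> N"
  proof
    assume "?L = N"
    then have "N \<subseteq> K" by blast
    then have "msum M N K = K" using msum_comm[OF sN sK] msum_absorb[OF sK sN] by simp
    then show False using lg nlK by simp
  qed
  moreover have "?L \<noteq> K"
  proof
    assume "?L = K"
    then have "K \<subseteq> N" by blast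
    then have "msum M N K = N" using msum_absorb[OF sN sK] by simp
    then show False using lg nlN by simp
  qed
  moreover have "msum M N ?L = N" using msum_absorb[OF sN sL] by blast
  moreover have "msum M ?L K = K" using msum_comm[OF sL sK] msum_absorb[OF sK sL] by simp
  ultimately show ?thesis unfolding lsg_adj_def using N K vL nlN nlK by metis
qed

lemma case2a:
  assumes N: "N \<in> lsg_vertices R M" and K: "K \<in> lsg_vertices R M"
    and NK: "N \<inter> K = {\<zero>\<^bsub>M\<^esub>}"
    and A: "submodule A R M" "A \<subseteq> K" "A \<noteq> {\<zero>\<^bsub>M\<^esub>}"
    and B: "submodule B R M" "B \<subseteq> K" "B \<noteq> {\<zero>\<^bsub>M\<^esub>}"
    and AB: "A \<inter> B = {\<zero>\<^bsub>M\<^esub>}"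
  shows "lsg_adj R M N A \<and> lsg_adj R M A K"
proof -
  have sN: "submodule N R M" and sK: "submodule K R M" using N K vert_sub by blast+
  have nlN: "\<not> large_submodule R M N" and nlK: "\<not> large_submodule R M K"
    and nzN: "N \<noteq> {\<zero>\<^bsub>M\<^esub>}"
    using N K unfolding lsg_vertices_def by blast+
  have key: "msum M N A \<inter> B \<subseteq> {\<zero>\<^bsub>M\<^esub>}"
  proof
    fix y assume "y \<in> msum M N A \<inter> B"
    then have y: "y \<in> msum M N A" "y \<in> B" by blast+
    from y(1) obtain n a where na: "n \<in> N" "a \<in> A" "y = n \<oplus>\<^bsub>M\<^esub> a" by (rule msumE)
    have c: "n \<in> carrier M" "a \<in> carrier M" using na sN A(1) sm_carr by blast+
    have "y \<oplus>\<^bsub>M\<^esub> \<ominus>\<^bsub>M\<^esub> a = n" using na(3) c by (simp add: M.a_assoc M.r_neg)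
    moreover have "y \<oplus>\<^bsub>M\<^esub> \<ominus>\<^bsub>M\<^esub> a \<in> K"
      using sm_add[OF sK _ sm_neg[OF sK]] y(2) B(2) na(2) A(2) by blast
    ultimately have "n = \<zero>\<^bsub>M\<^esub>" using na(1) NK by blast
    then have "y = a" using na(3) c by simp
    then show "y \<in> {\<zero>\<^bsub>M\<^esub>}" using na(2) y(2) AB by blast
  qed
  have sNA: "submodule (msum M N A) R M" using msum_sub[OF sN A(1)] .
  have nl1: "\<not> large_submodule R M (msum M N A)"
  proof
    assume "large_submodule R M (msum M N A)"
    then have "msum M N A \<inter> B \<noteq> {\<zero>\<^bsub>M\<^esub>}" using B unfolding large_submodule_def by blast
    then show False using key sm_zero[OF sNA] sm_zero[OF B(1)] by blast
  qed
  have nlA: "\<not> large_submodule R M A" using AB B unfolding large_submodule_def by blast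
  have vA: "A \<in> lsg_vertices R M" unfolding lsg_vertices_def using A nlA by blast
  have "A \<noteq> N"
  proof
    assume "A = N"
    then have "N \<inter> K = N" using A(2) by blast
    then show False using NK nzN by simp
  qed
  moreover have "A \<noteq> K"
  proof
    assume "A = K"
    then have "A \<inter> B = B" using B(2) by blast
    then show False using AB B(3) by simp
  qed
  moreover have "msum M A K = K" using msum_comm[OF A(1) sK] msum_absorb[OF sK A(1) A(2)] by simp
  ultimately show ?thesis unfolding lsg_adj_def using N K vA nlK nl1 by metis
qed

lemma case2c:
  assumes N: "N \<in> lsg_vertices R M" and K: "K \<in> lsg_vertices R M"
    and NK: "N \<inter> K = {\<zero>\<^bsub>M\<^esub>}"
    and lg: "large_submodule R M (msum M N K)"
    and I: "I \<subseteq> carrier R" "N = ann_M R M I"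
    and J: "J \<subseteq> carrier R" "K = ann_M R M J"
    and uN: "\<And>A B. submodule A R M \<Longrightarrow> submodule B R M \<Longrightarrow> A \<subseteq> N \<Longrightarrow> B \<subseteq> N \<Longrightarrow>
               A \<noteq> {\<zero>\<^bsub>M\<^esub>} \<Longrightarrow> B \<noteq> {\<zero>\<^bsub>M\<^esub>} \<Longrightarrow> A \<inter> B \<noteq> {\<zero>\<^bsub>M\<^esub>}"
    and uK: "\<And>A B. submodule A R M \<Longrightarrow> submodule B R M \<Longrightarrow> A \<subseteq> K \<Longrightarrow> B \<subseteq> K \<Longrightarrow>
               A \<noteq> {\<zero>\<^bsub>M\<^esub>} \<Longrightarrow> B \<noteq> {\<zero>\<^bsub>M\<^esub>} \<Longrightarrow> A \<inter> B \<noteq> {\<zero>\<^bsub>M\<^esub>}"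
    and conn: "(lsg_adj R M)\<^sup>*\<^sup>* N K"
  shows False
proof -
  have sN: "submodule N R M" and sK: "submodule K R M" using N K vert_sub by blast+
  have nzK: "K \<noteq> {\<zero>\<^bsub>M\<^esub>}" using K unfolding lsg_vertices_def by blast
  have F1: "Y \<inter> K \<noteq> {\<zero>\<^bsub>M\<^esub>}" if "submodule Y R M" "Y \<noteq> {\<zero>\<^bsub>M\<^esub>}" "Y \<inter> N = {\<zero>\<^bsub>M\<^esub>}" for Y
    using F[OF sN sK NK lg I that] .
  have lg': "large_submodule R M (msum M K N)" using lg msum_comm[OF sN sK] by simp
  have KN: "K \<inter> N = {\<zero>\<^bsub>M\<^esub>}" using NK by blast
  have F2: "Y \<inter> N \<noteq> {\<zero>\<^bsub>M\<^esub>}" if "submodule Y R M" "Y \<noteq> {\<zero>\<^bsub>M\<^esub>}" "Y \<inter> K = {\<zero>\<^bsub>M\<^esub>}" for Y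
    using F[OF sK sN KN lg' J that] .
  have UN: "X \<inter> Y \<noteq> {\<zero>\<^bsub>M\<^esub>}" if "submodule X R M" "submodule Y R M"
     "X \<inter> N \<noteq> {\<zero>\<^bsub>M\<^esub>}" "Y \<inter> N \<noteq> {\<zero>\<^bsub>M\<^esub>}" for X Y
  proof -
    note th = that
    have "(X \<inter> N) \<inter> (Y \<inter> N) \<noteq> {\<zero>\<^bsub>M\<^esub>}"
      using uN[OF sm_inter[OF that(1) sN] sm_inter[OF that(2) sN] _ _ that(3,4)] by blast
    then obtain x where "x \<in> (X \<inter> N) \<inter> (Y \<inter> N)" "x \<noteq> \<zero>\<^bsub>M\<^esub>"
      by (rule nonzeroE[OF sm_inter[OF sm_inter[OF th(1) sN] sm_inter[OF th(2) sN]]])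
    then show ?thesis by blast
  qed
  have UK: "X \<inter> Y \<noteq> {\<zero>\<^bsub>M\<^esub>}" if "submodule X R M" "submodule Y R M"
     "X \<inter> K \<noteq> {\<zero>\<^bsub>M\<^esub>}" "Y \<inter> K \<noteq> {\<zero>\<^bsub>M\<^esub>}" for X Y
  proof -
    note th = that
    have "(X \<inter> K) \<inter> (Y \<inter> K) \<noteq> {\<zero>\<^bsub>M\<^esub>}"
      using uK[OF sm_inter[OF that(1) sK] sm_inter[OF that(2) sK] _ _ that(3,4)] by blast
    then obtain x where "x \<in> (X \<inter> K) \<inter> (Y \<inter> K)" "x \<noteq> \<zero>\<^bsub>M\<^esub>"
      by (rule nonzeroE[OF sm_inter[OF sm_inter[OF th(1) sK] sm_inter[OF th(2) sK]]])
    then show ?thesis by blast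
  qed
  have C1: "large_submodule R M X" if "submodule X R M" "X \<inter> N \<noteq> {\<zero>\<^bsub>M\<^esub>}" "X \<inter> K \<noteq> {\<zero>\<^bsub>M\<^esub>}" for X
    unfolding large_submodule_def
  proof (intro conjI allI impI)
    show "submodule X R M" by fact
    fix Y assume Y: "submodule Y R M \<and> Y \<noteq> {\<zero>\<^bsub>M\<^esub>}"
    show "X \<inter> Y \<noteq> {\<zero>\<^bsub>M\<^esub>}"
    proof (cases "Y \<inter> N = {\<zero>\<^bsub>M\<^esub>}")
      case True
      then have "Y \<inter> K \<noteq> {\<zero>\<^bsub>M\<^esub>}" using F1 Y by blast
      then show ?thesis using UK that Y by blast
    next
      case False
      then show ?thesis using UN that Y by blast
    qed
  qed
  have C2: "large_submodule R M (msum M X Z)" if "submodule X R M" "submodule Z R M"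
    "X \<noteq> {\<zero>\<^bsub>M\<^esub>}" "X \<inter> K = {\<zero>\<^bsub>M\<^esub>}" "Z \<noteq> {\<zero>\<^bsub>M\<^esub>}" "Z \<inter> N = {\<zero>\<^bsub>M\<^esub>}" for X Z
    unfolding large_submodule_def
  proof (intro conjI allI impI)
    show "submodule (msum M X Z) R M" using msum_sub that by blast
    have XN: "X \<inter> N \<noteq> {\<zero>\<^bsub>M\<^esub>}" using F2 that by blast
    have ZK: "Z \<inter> K \<noteq> {\<zero>\<^bsub>M\<^esub>}" using F1 that by blast
    have Xs: "X \<subseteq> msum M X Z" using msum_left_sub that by blast
    have Zs: "Z \<subseteq> msum M X Z" using msum_left_sub[OF that(2,1)] msum_comm[OF that(1,2)] by simp
    have z0: "\<zero>\<^bsub>M\<^esub> \<in> msum M X Z" using Xs sm_zero that(1) by blast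
    note th = that
    fix Y assume Y: "submodule Y R M \<and> Y \<noteq> {\<zero>\<^bsub>M\<^esub>}"
    then have sY: "submodule Y R M" and nzY: "Y \<noteq> {\<zero>\<^bsub>M\<^esub>}" by auto
    show "msum M X Z \<inter> Y \<noteq> {\<zero>\<^bsub>M\<^esub>}"
    proof (cases "Y \<inter> N = {\<zero>\<^bsub>M\<^esub>}")
      case True
      then have "Y \<inter> K \<noteq> {\<zero>\<^bsub>M\<^esub>}" using F1[OF sY nzY] by blast
      then have "Z \<inter> Y \<noteq> {\<zero>\<^bsub>M\<^esub>}" using UK[OF th(2) sY ZK] by blast
      then obtain x where "x \<in> Z" "x \<in> Y" "x \<noteq> \<zero>\<^bsub>M\<^esub>" by (rule nz_int[OF th(2) sY])
      then have "x \<in> msum M X Z \<inter> Y" using Zs by blast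
      then show ?thesis using \<open>x \<noteq> \<zero>\<^bsub>M\<^esub>\<close> by blast
    next
      case False
      then have "X \<inter> Y \<noteq> {\<zero>\<^bsub>M\<^esub>}" using UN[OF th(1) sY XN] by blast
      then obtain x where "x \<in> X" "x \<in> Y" "x \<noteq> \<zero>\<^bsub>M\<^esub>" by (rule nz_int[OF th(1) sY])
      then have "x \<in> msum M X Z \<inter> Y" using Xs by blast
      then show ?thesis using \<open>x \<noteq> \<zero>\<^bsub>M\<^esub>\<close> by blast
    qed
  qed
  have "Z \<inter> K = {\<zero>\<^bsub>M\<^esub>}" if "(lsg_adj R M)\<^sup>*\<^sup>* N Z" for Z
    using that
  proof (induction rule: rtranclp_induct)
    case base
    then show ?case using NK .
  next
    case (step X Z)
    have vX: "X \<in> lsg_vertices R M" and vZ: "Z \<in> lsg_vertices R M"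
      and nl: "\<not> large_submodule R M (msum M X Z)"
      using step(2) unfolding lsg_adj_def by blast+
    have sX: "submodule X R M" and sZ: "submodule Z R M" using vX vZ vert_sub by blast+
    have nzX: "X \<noteq> {\<zero>\<^bsub>M\<^esub>}" and nzZ: "Z \<noteq> {\<zero>\<^bsub>M\<^esub>}"
      and nlZ: "\<not> large_submodule R M Z"
      using vX vZ unfolding lsg_vertices_def by blast+
    show ?case
    proof (rule ccontr)
      assume ZK: "Z \<inter> K \<noteq> {\<zero>\<^bsub>M\<^esub>}"
      have "Z \<inter> N = {\<zero>\<^bsub>M\<^esub>}" using C1[OF sZ _ ZK] nlZ by blast
      then show False using C2[OF sX sZ nzX step(3) nzZ] nl by blast
    qed
  qed
  from this[OF conn] show False using nzK by simp
qed

end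


lemma dist2:
  fixes R :: "('a, 'r) ring_scheme" and M :: "('a, 'b, 'm) module_scheme"
  assumes mod: "Module.module R M"
    and cm: "comultiplication_module R M"
    and conn: "graph_connected (lsg_vertices R M) (lsg_adj R M)"
    and u: "u \<in> lsg_vertices R M" and v: "v \<in> lsg_vertices R M"
  shows "\<exists>n\<le>2. (lsg_adj R M ^^ n) u v"
proof -
  interpret Module.module R M by (rule mod)
  have ann: "\<exists>I. I \<subseteq> carrier R \<and> X = ann_M R M I" if sX: "submodule X R M" for X
  proof -
    from cm have "\<forall>N. submodule N R M \<longrightarrow> (\<exists>I. ideal I R \<and> N = ann_M R M I)"
      unfolding comultiplication_module_def by (rule conjunct2)
    then obtain I where "ideal I R" "X = ann_M R M I" using sX by blast
    then show ?thesis using ideal_sub by blast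
  qed
  have two: "(lsg_adj R M ^^ 2) u v" if "\<exists>L. lsg_adj R M u L \<and> lsg_adj R M L v"
  proof -
    from that obtain L where "lsg_adj R M u L" "lsg_adj R M L v" by blast
    then have "(lsg_adj R M ^^ Suc (Suc 0)) u v"
      by (meson relpowp_0_I relpowp_Suc_I)
    then show ?thesis by (simp add: numeral_2_eq_2)
  qed
  show ?thesis
  proof (cases "u = v")
    case True
    then show ?thesis using relpowp_0_I[of "lsg_adj R M" u] by (intro exI[of _ 0]) simp
  next
    case uv: False
    show ?thesis
    proof (cases "lsg_adj R M u v")
      case True
      then have "(lsg_adj R M ^^ Suc 0) u v" by (rule relpowp_Suc_I[OF relpowp_0_I])
      moreover have "Suc 0 \<le> 2" by simp
      ultimately show ?thesis by blast
    next
      case nadj: False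
      have lg: "large_submodule R M (msum M u v)"
        using nadj uv u v unfolding lsg_adj_def by blast
      have su: "submodule u R M" and sv: "submodule v R M" using u v vert_sub by blast+
      have "\<exists>L. lsg_adj R M u L \<and> lsg_adj R M L v"
      proof (cases "u \<inter> v = {\<zero>\<^bsub>M\<^esub>}")
        case False
        then show ?thesis using case1[OF u v uv lg] by blast
      next
        case NK: True
        obtain I where I: "I \<subseteq> carrier R" "u = ann_M R M I" using ann[OF su] by blast
        obtain J where J: "J \<subseteq> carrier R" "v = ann_M R M J" using ann[OF sv] by blast
        show ?thesis
        proof (cases "\<exists>A B. submodule A R M \<and> submodule B R M \<and> A \<subseteq> v \<and> B \<subseteq> v \<and>
               A \<noteq> {\<zero>\<^bsub>M\<^esub>} \<and> B \<noteq> {\<zero>\<^bsub>M\<^esub>} \<and> A \<inter> B = {\<zero>\<^bsub>M\<^esub>}")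
          case True
          then obtain A B where h: "submodule A R M" "submodule B R M" "A \<subseteq> v" "B \<subseteq> v"
               "A \<noteq> {\<zero>\<^bsub>M\<^esub>}" "B \<noteq> {\<zero>\<^bsub>M\<^esub>}" "A \<inter> B = {\<zero>\<^bsub>M\<^esub>}" by blast
          have "lsg_adj R M u A \<and> lsg_adj R M A v" by (rule case2a[OF u v NK h(1,3,5,2,4,6,7)])
          then show ?thesis by blast
        next
          case nK: False
          show ?thesis
          proof (cases "\<exists>A B. submodule A R M \<and> submodule B R M \<and> A \<subseteq> u \<and> B \<subseteq> u \<and>
               A \<noteq> {\<zero>\<^bsub>M\<^esub>} \<and> B \<noteq> {\<zero>\<^bsub>M\<^esub>} \<and> A \<inter> B = {\<zero>\<^bsub>M\<^esub>}")
            case True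
            then obtain A B where h: "submodule A R M" "submodule B R M" "A \<subseteq> u" "B \<subseteq> u"
                 "A \<noteq> {\<zero>\<^bsub>M\<^esub>}" "B \<noteq> {\<zero>\<^bsub>M\<^esub>}" "A \<inter> B = {\<zero>\<^bsub>M\<^esub>}" by blast
            have vu: "v \<inter> u = {\<zero>\<^bsub>M\<^esub>}" using NK by blast
            have "lsg_adj R M v A \<and> lsg_adj R M A u" by (rule case2a[OF v u vu h(1,3,5,2,4,6,7)])
            then show ?thesis using adj_sym by blast
          next
            case False
            have "(lsg_adj R M)\<^sup>*\<^sup>* u v" using conn u v unfolding graph_connected_def by blast
            note nU = False
            have uN: "A \<inter> B \<noteq> {\<zero>\<^bsub>M\<^esub>}" if "submodule A R M" "submodule B R M" "A \<subseteq> u" "B \<subseteq> u"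
              "A \<noteq> {\<zero>\<^bsub>M\<^esub>}" "B \<noteq> {\<zero>\<^bsub>M\<^esub>}" for A B
              using nU that by blast
            have uK: "A \<inter> B \<noteq> {\<zero>\<^bsub>M\<^esub>}" if "submodule A R M" "submodule B R M" "A \<subseteq> v" "B \<subseteq> v"
              "A \<noteq> {\<zero>\<^bsub>M\<^esub>}" "B \<noteq> {\<zero>\<^bsub>M\<^esub>}" for A B
              using nK that by blast
            from case2c[OF u v NK lg I J uN uK] \<open>(lsg_adj R M)\<^sup>*\<^sup>* u v\<close> have False by blast
            then show ?thesis ..
          qed
        qed
      qed
      then show ?thesis using two by blast
    qed
  qed
qed

theorem theorem2p7:
  fixes R :: "('a, 'r) ring_scheme" and M :: "('a, 'b, 'm) module_scheme"
  assumes "cring R"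
    and "Module.module R M"
    and "carrier M \<noteq> {\<zero>\<^bsub>M\<^esub>}"
    and "comultiplication_module R M"
    and "lsg_vertices R M \<noteq> {}"
    and "graph_connected (lsg_vertices R M) (lsg_adj R M)"
  shows "graph_diam (lsg_vertices R M) (lsg_adj R M) \<le> 2"
  unfolding graph_diam_def
proof (intro SUP_least)
  fix u v assume u: "u \<in> lsg_vertices R M" and v: "v \<in> lsg_vertices R M"
  obtain n where n: "n \<le> 2" "(lsg_adj R M ^^ n) u v"
    using dist2[OF assms(2) assms(4) assms(6) u v] by blast
  have "enat n \<le> 2" using n(1) by (simp add: numeral_eq_enat)
  moreover have "graph_dist (lsg_adj R M) u v \<le> enat n"
    unfolding graph_dist_def by (rule INF_lower) (use n(2) in simp)
  ultimately show "graph_dist (lsg_adj R M) u v \<le> 2" by (rule order_trans[rotated])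
qed

end
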